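(* Let $n\geq1$, $\sigma_0>0$ and $0<\gamma<1$. Suppose that for each $0<\sigma\leq\sigma_0$ and each $0<\alpha<1$ a symmetric Markov kernel $K^\sigma_\alpha$ on $\mathbb{R}^n$ is given with $K^\sigma_\alpha\in\mathcal{S}(\sigma,\alpha)$ and $K^\sigma_\alpha\in\mathcal{H}\bigl(\gamma,\bigl(\tfrac{1+\gamma}{1-\gamma}\bigr)^{n+\sigma}\bigr)$. Then the operator \[\mathcal{K}^{**}f(x)=\sup_{0<\alpha<1,\ 0<\sigma\leq\sigma_0}\left|\int_{\mathbb{R}^n}K^\sigma_\alpha(x,z)f(z)\,dz\right|\] is of weak type $(1,1)$ and bounded on $L^p(\mathbb{R}^n)$ for $1<p\leq\infty$.
   Context: A symmetric Markov kernel on $\mathbb{R}^n$ is a nonnegative measurable function $K$ on $\mathbb{R}^n\times\mathbb{R}^n$ with $K(x,z)=K(z,x)$ and $\int_{\mathbb{R}^n}K(x,z)\,dz=1$ for every $x$. For $0<\gamma<1$ and $H\geq1$, $K\in\mathcal{H}(\gamma,H)$ means that for every $x\in\mathbb{R}^n$ and every $\xi\neq x$, $\sup_{z\in B(\xi,\gamma|x-\xi|)}K(x,z)\leq H\inf_{z\in B(\xi,\gamma|x-\xi|)}K(x,z)$. $K\in\mathcal{S}(\sigma,\alpha)$ means $\lim_{|x-z|\to\infty}|x-z|^{n+\sigma}K(x,z)=\alpha$. *)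

theory Defs
  imports "HOL-Analysis.Analysis"
begin

text \<open>Symmetric Markov kernel on R^n (R^n rendered as a Euclidean space 'a, n = DIM('a)).\<close>
definition sym_markov_kernel :: "('a::euclidean_space \<Rightarrow> 'a \<Rightarrow> real) \<Rightarrow> bool" where
  "sym_markov_kernel K \<longleftrightarrow>
     (\<lambda>(x, z). K x z) \<in> borel_measurable borel \<and>
     (\<forall>x z. 0 \<le> K x z) \<and>
     (\<forall>x z. K x z = K z x) \<and>
     (\<forall>x. (\<integral>\<^sup>+ z. ennreal (K x z) \<partial>lborel) = 1)"

text \<open>Class H(gamma, H): sup over the ball is at most H times the inf over the ball
  (written out pairwise).\<close>
definition kernel_H :: "real \<Rightarrow> real \<Rightarrow> ('a::euclidean_space \<Rightarrow> 'a \<Rightarrow> real) \<Rightarrow> bool" where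
  "kernel_H \<gamma> H K \<longleftrightarrow>
     (\<forall>x \<xi>. \<xi> \<noteq> x \<longrightarrow>
        (\<forall>z1 \<in> ball \<xi> (\<gamma> * dist x \<xi>). \<forall>z2 \<in> ball \<xi> (\<gamma> * dist x \<xi>). K x z1 \<le> H * K x z2))"

definition kernel_S :: "real \<Rightarrow> real \<Rightarrow> ('a::euclidean_space \<Rightarrow> 'a \<Rightarrow> real) \<Rightarrow> bool" where
  "kernel_S \<sigma> \<alpha> K \<longleftrightarrow>
     (\<forall>\<epsilon>>0. \<exists>R. \<forall>x z. R < dist x z \<longrightarrow>
        \<bar>dist x z powr (real DIM('a) + \<sigma>) * K x z - \<alpha>\<bar> < \<epsilon>)"

definition max_op :: "real \<Rightarrow> (real \<Rightarrow> real \<Rightarrow> 'a::euclidean_space \<Rightarrow> 'a \<Rightarrow> real)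
    \<Rightarrow> ('a \<Rightarrow> real) \<Rightarrow> 'a \<Rightarrow> ennreal" where
  "max_op \<sigma>0 K f x =
     (SUP (\<alpha>, \<sigma>) \<in> {0<..<1} \<times> {0<..\<sigma>0}. ennreal \<bar>\<integral> z. K \<sigma> \<alpha> x z * f z \<partial>lborel\<bar>)"

text \<open>Outer Lebesgue measure (the level sets of the maximal operator need not be known
  to be measurable a priori).\<close>
definition outer_leb :: "'a::euclidean_space set \<Rightarrow> ennreal" where
  "outer_leb S = (INF A \<in> {A \<in> sets lborel. S \<subseteq> A}. emeasure lborel A)"

definition upper_nn_integral :: "('a::euclidean_space \<Rightarrow> ennreal) \<Rightarrow> ennreal" where
  "upper_nn_integral g =
     (INF h \<in> {h \<in> borel_measurable lborel. \<forall>x. g x \<le> h x}. \<integral>\<^sup>+ x. h x \<partial>lborel)"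

definition weak_type_11 :: "(('a::euclidean_space \<Rightarrow> real) \<Rightarrow> 'a \<Rightarrow> ennreal) \<Rightarrow> bool" where
  "weak_type_11 T \<longleftrightarrow> (\<exists>C::real. 0 \<le> C \<and>
     (\<forall>f. integrable lborel f \<longrightarrow> (\<forall>t::real. 0 < t \<longrightarrow>
        ennreal t * outer_leb {x. ennreal t < T f x}
          \<le> ennreal C * (\<integral>\<^sup>+ z. ennreal \<bar>f z\<bar> \<partial>lborel))))"

definition bounded_Lp :: "real \<Rightarrow> (('a::euclidean_space \<Rightarrow> real) \<Rightarrow> 'a \<Rightarrow> ennreal) \<Rightarrow> bool" where
  "bounded_Lp p T \<longleftrightarrow> (\<exists>C::real. 0 \<le> C \<and>
     (\<forall>f. f \<in> borel_measurable lborel \<longrightarrow>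
          (\<integral>\<^sup>+ z. ennreal (\<bar>f z\<bar> powr p) \<partial>lborel) < \<infinity> \<longrightarrow>
          upper_nn_integral (\<lambda>x. if T f x = \<infinity> then \<infinity> else ennreal (enn2real (T f x) powr p))
            \<le> ennreal (C powr p) * (\<integral>\<^sup>+ z. ennreal (\<bar>f z\<bar> powr p) \<partial>lborel)))"

definition bounded_Linf :: "(('a::euclidean_space \<Rightarrow> real) \<Rightarrow> 'a \<Rightarrow> ennreal) \<Rightarrow> bool" where
  "bounded_Linf T \<longleftrightarrow> (\<exists>C::real. 0 \<le> C \<and>
     (\<forall>f M. f \<in> borel_measurable lborel \<longrightarrow> (AE z in lborel. \<bar>f z\<bar> \<le> M) \<longrightarrow>
          (AE x in lborel. T f x \<le> ennreal (C * M))))"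

end

theory Submission
  imports Defs
begin


definition Mx :: "('a::euclidean_space \<Rightarrow> real) \<Rightarrow> 'a \<Rightarrow> ennreal" where
  "Mx f x = (SUP r \<in> {r. r \<in> \<rat> \<and> 0 < r}.
      (\<integral>\<^sup>+ z. ennreal \<bar>f z\<bar> * indicator (ball x r) z \<partial>lborel) *
        ennreal (1 / (unit_ball_vol (real DIM('a)) * r ^ DIM('a))))"

lemma ind_ball_meas:
  "(\<lambda>p::'a::euclidean_space\<times>'a. indicator (ball (fst p) r) (snd p) :: ennreal) \<in> borel_measurable (borel \<Otimes>\<^sub>M borel)"
proof -
  have "(\<lambda>p::'a\<times>'a. indicator (ball (fst p) r) (snd p) :: ennreal) = (\<lambda>p. if dist (fst p) (snd p) < r then 1 else 0)"
    by (auto simp: indicator_def mem_ball)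
  also have "\<dots> \<in> borel_measurable (borel \<Otimes>\<^sub>M borel)" by measurable
  finally show ?thesis .
qed

lemma countable_posrat: "countable {r::real. r \<in> \<rat> \<and> 0 < r}"
  by (rule countable_subset[OF _ countable_rat]) auto

lemma Mx_meas:
  fixes f :: "'a::euclidean_space \<Rightarrow> real"
  assumes f: "f \<in> borel_measurable lborel"
  shows "Mx f \<in> borel_measurable lborel"
  unfolding Mx_def
proof (rule borel_measurable_SUP[OF countable_posrat])
  fix r :: real
  have f': "f \<in> borel_measurable borel" using f by simp
  have "(\<lambda>p::'a\<times>'a. ennreal \<bar>f (snd p)\<bar> * indicator (ball (fst p) r) (snd p)) \<in> borel_measurable (borel \<Otimes>\<^sub>M borel)"
    using f' ind_ball_meas[of r] by measurable
  then have "case_prod (\<lambda>x z. ennreal \<bar>f z\<bar> * indicator (ball x r) z) \<in> borel_measurable (lborel \<Otimes>\<^sub>M (lborel::'a measure))"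
    by (simp add: measurable_cong_sets[OF sets_pair_measure_cong[OF sets_lborel sets_lborel] refl] split_beta')
  then have "(\<lambda>x. \<integral>\<^sup>+ z. ennreal \<bar>f z\<bar> * indicator (ball x r) z \<partial>lborel) \<in> borel_measurable lborel"
    by (rule lborel.borel_measurable_nn_integral)
  then show "(\<lambda>x. (\<integral>\<^sup>+ z. ennreal \<bar>f z\<bar> * indicator (ball x r) z \<partial>lborel) *
        ennreal (1 / (unit_ball_vol (real DIM('a)) * r ^ DIM('a)))) \<in> borel_measurable lborel"
    by measurable
qed

lemma Mx_ge:
  assumes "r \<in> \<rat>" "0 < r"
  shows "(\<integral>\<^sup>+ z. ennreal \<bar>f z\<bar> * indicator (ball x r) z \<partial>lborel) *
        ennreal (1 / (unit_ball_vol (real DIM('a)) * r ^ DIM('a))) \<le> Mx f (x::'a::euclidean_space)"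
  unfolding Mx_def using assms by (intro SUP_upper) auto



lemma count_space_ge:
  fixes g :: "'i \<Rightarrow> ennreal"
  assumes "j \<in> I"
  shows "g j \<le> (\<integral>\<^sup>+ i. g i \<partial>count_space I)"
proof -
  have "(\<integral>\<^sup>+ i. g i * indicator {j} i \<partial>count_space I) = (\<Sum>i\<in>{j}. g i * indicator {j} i)"
    using assms by (intro nn_integral_count_space') auto
  also have "\<dots> = g j" by simp
  finally have "g j = (\<integral>\<^sup>+ i. g i * indicator {j} i \<partial>count_space I)" by simp
  also have "\<dots> \<le> (\<integral>\<^sup>+ i. g i \<partial>count_space I)"
    by (intro nn_integral_mono) (auto simp: indicator_def)
  finally show ?thesis .
qed

lemma emeasure_UN_countable_le:
  assumes I: "countable I" and X: "\<And>i. i \<in> I \<Longrightarrow> X i \<in> sets M"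
  shows "emeasure M (\<Union>(X ` I)) \<le> (\<integral>\<^sup>+ i. emeasure M (X i) \<partial>count_space I)"
proof -
  have U: "\<Union>(X ` I) \<in> sets M" using I X by (intro sets.countable_UN'') auto
  have "emeasure M (\<Union>(X ` I)) = (\<integral>\<^sup>+ x. indicator (\<Union>(X ` I)) x \<partial>M)"
    using U by simp
  also have "\<dots> \<le> (\<integral>\<^sup>+ x. (\<integral>\<^sup>+ i. indicator (X i) x \<partial>count_space I) \<partial>M)"
  proof (intro nn_integral_mono)
    fix x
    show "indicator (\<Union>(X ` I)) x \<le> (\<integral>\<^sup>+ i. indicator (X i) x \<partial>count_space I)"
    proof (cases "x \<in> \<Union>(X ` I)")
      case True
      then obtain j where j: "j \<in> I" "x \<in> X j" by auto
      have "indicator (\<Union>(X ` I)) x = (indicator (X j) x :: ennreal)" using True j by simp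
      also have "\<dots> \<le> (\<integral>\<^sup>+ i. indicator (X i) x \<partial>count_space I)"
        using j by (intro count_space_ge)
      finally show ?thesis .
    qed simp
  qed
  also have "\<dots> = (\<integral>\<^sup>+ i. (\<integral>\<^sup>+ x. indicator (X i) x \<partial>M) \<partial>count_space I)"
    using I X by (intro nn_integral_count_space_nn_integral) auto
  also have "\<dots> = (\<integral>\<^sup>+ i. emeasure M (X i) \<partial>count_space I)"
    using X by (intro nn_integral_cong) (auto simp: space_count_space)
  finally show ?thesis .
qed

lemma Mx_weak:
  fixes f :: "'a::euclidean_space \<Rightarrow> real"
  assumes f: "f \<in> borel_measurable lborel"
    and fin: "(\<integral>\<^sup>+ z. ennreal \<bar>f z\<bar> \<partial>lborel) < \<infinity>" and t: "0 < t"
  shows "ennreal t * emeasure lborel {x. ennreal t < Mx f x}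
           \<le> ennreal (5 ^ DIM('a)) * (\<integral>\<^sup>+ z. ennreal \<bar>f z\<bar> \<partial>lborel)"
proof -
  define n where "n = DIM('a)"
  define V where "V = unit_ball_vol (real DIM('a))"
  have V: "0 < V" unfolding V_def by simp
  have n1: "1 \<le> n" unfolding n_def using DIM_positive[where 'a='a] by linarith
  define N where "N = density lborel (\<lambda>z. ennreal \<bar>f z\<bar>)"
  have f': "(\<lambda>z. ennreal \<bar>f z\<bar>) \<in> borel_measurable lborel" using f by measurable
  have NB: "emeasure N B = (\<integral>\<^sup>+ z. ennreal \<bar>f z\<bar> * indicator B z \<partial>lborel)" if "B \<in> sets lborel" for B
    unfolding N_def using that f' by (simp add: emeasure_density)
  obtain I where I: "(\<integral>\<^sup>+ z. ennreal \<bar>f z\<bar> \<partial>lborel) = ennreal I" "0 \<le> I"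
    using fin by (cases "(\<integral>\<^sup>+ z. ennreal \<bar>f z\<bar> \<partial>lborel)") auto
  define J where "J = (\<lambda>x r. \<integral>\<^sup>+ z. ennreal \<bar>f z\<bar> * indicator (ball x r) z \<partial>lborel)"
  have JI: "J x r \<le> ennreal I" for x r
    unfolding J_def I(1)[symmetric] by (intro nn_integral_mono) (auto simp: indicator_def)
  define S where "S = {x. ennreal t < Mx f x}"
  define Ks where "Ks = {(x, r). r \<in> \<rat> \<and> 0 < r \<and> ennreal t * ennreal (V * r ^ n) < J x r}"
  have cover: "S \<subseteq> (\<Union>i\<in>Ks. ball (fst i) (snd i))"
  proof
    fix x assume "x \<in> S"
    then have "ennreal t < Mx f x" unfolding S_def by simp
    then obtain r where r: "r \<in> \<rat>" "0 < r" "ennreal t < J x r * ennreal (1 / (V * r ^ n))"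
      unfolding Mx_def J_def V_def n_def by (auto simp: less_SUP_iff)
    have pos: "0 < V * r ^ n" using V r by simp
    have "ennreal t * ennreal (V * r ^ n) < J x r * ennreal (1 / (V * r ^ n)) * ennreal (V * r ^ n)"
      using r pos by (intro ennreal_mult_strict_right_mono) auto
    also have "\<dots> = J x r"
      using pos V r(2) by (simp add: mult.assoc ennreal_mult'[symmetric])
    finally have "(x, r) \<in> Ks" unfolding Ks_def using r by simp
    then show "x \<in> (\<Union>i\<in>Ks. ball (fst i) (snd i))" using r by force
  qed
  define Bd where "Bd = max 1 (I / (t * V))"
  have rad: "0 < snd i \<and> snd i \<le> Bd" if hi: "i \<in> Ks" for i
  proof -
    obtain x r where i: "i = (x, r)" and r: "r \<in> \<rat>" "0 < r" "ennreal t * ennreal (V * r ^ n) < J x r"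
      using hi unfolding Ks_def by (cases i) auto
    have "ennreal (t * (V * r ^ n)) < ennreal I"
      using r(3) JI[of x r] t V r by (simp add: ennreal_mult')
    then have "t * (V * r ^ n) < I" using I t V r by (smt (verit, best) ennreal_le_iff2 leD)
    then have "r ^ n < I / (t * V)" using t V by (simp add: field_simps)
    moreover have "r \<le> r ^ n" if "1 < r"
      using that n1 by (metis less_imp_le power_increasing power_one_right)
    ultimately have "r \<le> Bd" unfolding Bd_def by (cases "1 < r") auto
    then show ?thesis using i r by simp
  qed
  obtain C where C: "countable C" "C \<subseteq> Ks"
     "pairwise (\<lambda>i j. disjnt (ball (fst i) (snd i)) (ball (fst j) (snd j))) C"
     "S \<subseteq> (\<Union>i\<in>C. ball (fst i) (5 * snd i))"
    using Vitali_covering_lemma_balls[OF cover, of Bd] rad by blast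
  have dj: "disjoint_family_on (\<lambda>i. ball (fst i) (snd i)) C"
    using C(3) unfolding disjoint_family_on_def pairwise_def disjnt_def by auto
  have "S \<in> sets lborel" unfolding S_def using Mx_meas[OF f] by measurable
  have "emeasure lborel S \<le> emeasure lborel (\<Union>i\<in>C. ball (fst i) (5 * snd i))"
    using C(4) by (intro emeasure_mono) (auto intro!: borel_open open_UN)
  also have "\<dots> \<le> (\<integral>\<^sup>+ i. emeasure lborel (ball (fst i) (5 * snd i)) \<partial>count_space C)"
    using C(1) by (intro emeasure_UN_countable_le) auto
  also have "\<dots> = (\<integral>\<^sup>+ i. ennreal (5 ^ n) * ennreal (V * snd i ^ n) \<partial>count_space C)"
  proof (intro nn_integral_cong)
    fix i assume "i \<in> space (count_space C)"
    then have "0 < snd i" using C(2) rad[of i] by auto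
    then show "emeasure lborel (ball (fst i) (5 * snd i)) = ennreal (5 ^ n) * ennreal (V * snd i ^ n)"
      by (simp add: emeasure_ball V_def n_def ennreal_mult'[symmetric] power_mult_distrib mult_ac)
  qed
  finally have "ennreal t * emeasure lborel S \<le>
      ennreal t * (\<integral>\<^sup>+ i. ennreal (5 ^ n) * ennreal (V * snd i ^ n) \<partial>count_space C)"
    by (intro mult_left_mono) auto
  also have "\<dots> = ennreal (5 ^ n) * (\<integral>\<^sup>+ i. ennreal t * ennreal (V * snd i ^ n) \<partial>count_space C)"
    by (simp add: nn_integral_cmult[symmetric] mult_ac)
  also have "\<dots> \<le> ennreal (5 ^ n) * (\<integral>\<^sup>+ i. emeasure N (ball (fst i) (snd i)) \<partial>count_space C)"
  proof (intro mult_left_mono nn_integral_mono)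
    fix i assume "i \<in> space (count_space C)"
    then have "i \<in> Ks" using C(2) by auto
    then show "ennreal t * ennreal (V * snd i ^ n) \<le> emeasure N (ball (fst i) (snd i))"
      unfolding Ks_def J_def by (auto simp: NB)
  qed auto
  also have "(\<integral>\<^sup>+ i. emeasure N (ball (fst i) (snd i)) \<partial>count_space C) \<le> (\<integral>\<^sup>+ z. ennreal \<bar>f z\<bar> \<partial>lborel)"
  proof -
    have "(\<integral>\<^sup>+ i. emeasure N (ball (fst i) (snd i)) \<partial>count_space C) = emeasure N (\<Union>i\<in>C. ball (fst i) (snd i))"
      using C(1) dj by (intro emeasure_UN_countable[symmetric]) (auto simp: N_def)
    also have "\<dots> \<le> emeasure N UNIV"
      by (intro emeasure_mono) (auto simp: N_def)
    also have "\<dots> = (\<integral>\<^sup>+ z. ennreal \<bar>f z\<bar> \<partial>lborel)"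
      using NB[of UNIV] by simp
    finally show ?thesis .
  qed
  finally show ?thesis unfolding S_def n_def by (simp add: mult_left_mono)
qed



lemma abs_integral_le_nn:
  fixes g :: "'a::euclidean_space \<Rightarrow> real"
  shows "ennreal \<bar>\<integral> z. g z \<partial>lborel\<bar> \<le> (\<integral>\<^sup>+ z. ennreal \<bar>g z\<bar> \<partial>lborel)"
proof (cases "integrable lborel g")
  case True
  have "ennreal \<bar>\<integral> z. g z \<partial>lborel\<bar> \<le> ennreal (\<integral> z. \<bar>g z\<bar> \<partial>lborel)"
    by (intro ennreal_leI integral_abs_bound)
  also have "\<dots> = (\<integral>\<^sup>+ z. ennreal \<bar>g z\<bar> \<partial>lborel)"
    using True by (intro nn_integral_eq_integral[symmetric]) auto
  finally show ?thesis .
next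
  case False
  then show ?thesis by (simp add: not_integrable_integral_eq)
qed

lemma pointwise_bound:
  fixes k f :: "'a::euclidean_space \<Rightarrow> real"
  assumes km: "k \<in> borel_measurable borel" and knn: "\<And>z. 0 \<le> k z"
    and k1: "(\<integral>\<^sup>+ z. ennreal (k z) \<partial>lborel) = 1"
    and kH: "\<And>\<xi> z1 z2. \<xi> \<noteq> x \<Longrightarrow> z1 \<in> ball \<xi> (\<gamma> * dist x \<xi>) \<Longrightarrow> z2 \<in> ball \<xi> (\<gamma> * dist x \<xi>) \<Longrightarrow> k z1 \<le> H * k z2"
    and H: "0 < H" and g0: "0 < \<gamma>" and g1: "\<gamma> < 1"
    and f: "f \<in> borel_measurable lborel"
  shows "ennreal \<bar>\<integral> z. k z * f z \<partial>lborel\<bar>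
           \<le> ennreal (H * (2 * (1 + \<gamma>) / ((1 - \<gamma>) * \<gamma>)) ^ DIM('a)) * Mx f x"
proof -
  define n where "n = DIM('a)"
  define V where "V = unit_ball_vol (real DIM('a))"
  have V: "0 < V" unfolding V_def by simp
  define D where "D = H * (2 * (1 + \<gamma>) / ((1 - \<gamma>) * \<gamma>)) ^ n"
  have f': "f \<in> borel_measurable borel" using f by simp
  have ballm[measurable]: "ball c r \<in> sets (lborel::'a measure)" for c r by simp
  define G where "G = (\<lambda>z w. if z \<noteq> x \<and> dist z w < \<gamma> * dist z x
      then ennreal (\<bar>f z\<bar> * H / (V * (\<gamma> * dist z x) ^ n) * k w) else 0)"
  have Gm: "case_prod G \<in> borel_measurable (lborel \<Otimes>\<^sub>M lborel)"
  proof -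
    have "(\<lambda>p. G (fst p) (snd p)) \<in> borel_measurable (borel \<Otimes>\<^sub>M borel)"
      unfolding G_def using f' km by measurable
    then show ?thesis
      by (simp add: measurable_cong_sets[OF sets_pair_measure_cong[OF sets_lborel sets_lborel] refl] split_beta')
  qed
  have "ennreal \<bar>\<integral> z. k z * f z \<partial>lborel\<bar> \<le> (\<integral>\<^sup>+ z. ennreal \<bar>k z * f z\<bar> \<partial>lborel)"
    by (rule abs_integral_le_nn)
  also have "\<dots> = (\<integral>\<^sup>+ z. ennreal (k z * \<bar>f z\<bar>) * indicator (- {x}) z \<partial>lborel)"
    using AE_lborel_singleton[of x]
    by (intro nn_integral_cong_AE) (auto simp: abs_mult knn)
  also have "\<dots> \<le> (\<integral>\<^sup>+ z. (\<integral>\<^sup>+ w. G z w \<partial>lborel) \<partial>lborel)"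
  proof (intro nn_integral_mono)
    fix z :: 'a
    show "ennreal (k z * \<bar>f z\<bar>) * indicator (- {x}) z \<le> (\<integral>\<^sup>+ w. G z w \<partial>lborel)"
    proof (cases "z = x")
      case False
      define \<rho> where "\<rho> = \<gamma> * dist z x"
      have \<rho>: "0 < \<rho>" unfolding \<rho>_def using False g0 by simp
      define c where "c = \<bar>f z\<bar> * H / (V * \<rho> ^ n)"
      have c: "0 \<le> c" unfolding c_def using V \<rho> H by simp
      have "(\<integral>\<^sup>+ w. G z w \<partial>lborel) = (\<integral>\<^sup>+ w. ennreal c * (ennreal (k w) * indicator (ball z \<rho>) w) \<partial>lborel)"
      proof (intro nn_integral_cong)
        fix w
        show "G z w = ennreal c * (ennreal (k w) * indicator (ball z \<rho>) w)"
        proof (cases "w \<in> ball z \<rho>")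
          case True
          then have "G z w = ennreal (c * k w)" using False
            by (simp add: G_def \<rho>_def c_def mult_ac times_divide_eq_right)
          then show ?thesis using True c by (simp add: ennreal_mult')
        next
          case F2: False
          then show ?thesis using False by (simp add: G_def \<rho>_def)
        qed
      qed
      also have "\<dots> = ennreal c * (\<integral>\<^sup>+ w. ennreal (k w) * indicator (ball z \<rho>) w \<partial>lborel)"
        using km by (intro nn_integral_cmult) (auto intro!: borel_measurable_times_ennreal borel_measurable_indicator)
      finally have eqG: "(\<integral>\<^sup>+ w. G z w \<partial>lborel) = ennreal c * (\<integral>\<^sup>+ w. ennreal (k w) * indicator (ball z \<rho>) w \<partial>lborel)" .
      have "(\<integral>\<^sup>+ w. ennreal (k z / H) * indicator (ball z \<rho>) w \<partial>lborel)
              \<le> (\<integral>\<^sup>+ w. ennreal (k w) * indicator (ball z \<rho>) w \<partial>lborel)"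
      proof (intro nn_integral_mono)
        fix w
        show "ennreal (k z / H) * indicator (ball z \<rho>) w \<le> ennreal (k w) * indicator (ball z \<rho>) w"
        proof (cases "w \<in> ball z \<rho>")
          case True
          have "k z \<le> H * k w"
            using kH[of z z w] False True \<rho> unfolding \<rho>_def by (simp add: dist_commute)
          then have "k z / H \<le> k w" using H by (simp add: field_simps)
          then show ?thesis using True by (simp add: ennreal_leI)
        qed simp
      qed
      moreover have "(\<integral>\<^sup>+ w. ennreal (k z / H) * indicator (ball z \<rho>) w \<partial>lborel) = ennreal (k z / H * (V * \<rho> ^ n))"
        using \<rho> H knn[of z] V by (subst nn_integral_cmult_indicator) (auto simp: emeasure_ball V_def n_def ennreal_mult'[symmetric])
      ultimately have "ennreal c * ennreal (k z / H * (V * \<rho> ^ n)) \<le> (\<integral>\<^sup>+ w. G z w \<partial>lborel)"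
        unfolding eqG by (intro mult_left_mono) auto
      moreover have "ennreal c * ennreal (k z / H * (V * \<rho> ^ n)) = ennreal (k z * \<bar>f z\<bar>)"
        using c \<rho> V H knn[of z] unfolding c_def by (simp add: ennreal_mult'[symmetric] field_simps)
      ultimately show ?thesis using False by simp
    qed simp
  qed
  also have "\<dots> = (\<integral>\<^sup>+ w. (\<integral>\<^sup>+ z. G z w \<partial>lborel) \<partial>lborel)"
    using lborel_pair.Fubini'[OF Gm] by simp
  also have "\<dots> \<le> (\<integral>\<^sup>+ w. ennreal (k w) * (ennreal D * Mx f x) \<partial>lborel)"
  proof (intro nn_integral_mono)
    fix w :: 'a
    show "(\<integral>\<^sup>+ z. G z w \<partial>lborel) \<le> ennreal (k w) * (ennreal D * Mx f x)"
    proof (cases "w = x")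
      case True
      have G0: "G z w = 0" for z
      proof -
        have "\<not> dist z x < \<gamma> * dist z x" using g1 zero_le_dist[of z x]
          by (metis mult_left_le_one_le g0 less_imp_le not_less)
        then show "G z w = 0" using True by (simp add: G_def)
      qed
      show ?thesis by (simp add: G0)
    next
      case False
      define s where "s = dist w x"
      have s: "0 < s" unfolding s_def using False by simp
      obtain R where R: "R \<in> \<rat>" "s / (1 - \<gamma>) < R" "R < 2 * s / (1 - \<gamma>)"
        using Rats_dense_in_real[of "s / (1 - \<gamma>)" "2 * s / (1 - \<gamma>)"] s g1
        by (auto simp: divide_strict_right_mono)
      have R0: "0 < R" using R(2) s g1 by (smt (verit) divide_pos_pos)
      define c1 where "c1 = H * (1 + \<gamma>) ^ n / (V * \<gamma> ^ n * s ^ n)"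
      have c1: "0 \<le> c1" unfolding c1_def using H V s g0 by simp
      have "(\<integral>\<^sup>+ z. G z w \<partial>lborel) \<le> (\<integral>\<^sup>+ z. ennreal (k w * c1) * (ennreal \<bar>f z\<bar> * indicator (ball x R) z) \<partial>lborel)"
      proof (intro nn_integral_mono)
        fix z
        show "G z w \<le> ennreal (k w * c1) * (ennreal \<bar>f z\<bar> * indicator (ball x R) z)"
        proof (cases "z \<noteq> x \<and> dist z w < \<gamma> * dist z x")
          case True
          define d where "d = dist z x"
          have d: "0 < d" unfolding d_def using True by simp
          have zw: "dist z w < \<gamma> * d" using True unfolding d_def by simp
          have "d \<le> dist z w + s" unfolding d_def s_def by (rule dist_triangle)
          then have "d * (1 - \<gamma>) < s" using zw by (simp add: algebra_simps)
          then have "d < s / (1 - \<gamma>)" using g1 by (simp add: field_simps)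
          then have zin: "z \<in> ball x R" using R(2) unfolding d_def by (simp add: dist_commute)
          have "s \<le> dist w z + d" unfolding d_def s_def by (rule dist_triangle)
          then have "s < (1 + \<gamma>) * d" using zw by (simp add: dist_commute algebra_simps)
          then have "\<gamma> * s \<le> \<gamma> * ((1 + \<gamma>) * d)" using g0 by (intro mult_left_mono) auto
          then have sd: "\<gamma> * s \<le> (1 + \<gamma>) * (\<gamma> * d)" by (simp add: mult_ac)
          have "(\<gamma> * s) ^ n \<le> ((1 + \<gamma>) * (\<gamma> * d)) ^ n"
            using sd g0 s by (intro power_mono) auto
          then have pw: "\<gamma> ^ n * s ^ n \<le> (1 + \<gamma>) ^ n * (\<gamma> * d) ^ n"
            by (simp add: power_mult_distrib)
          have "H / (V * (\<gamma> * d) ^ n) \<le> c1"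
            unfolding c1_def using pw H V g0 s d
            by (simp add: field_simps mult_left_mono)
          then have "\<bar>f z\<bar> * H / (V * (\<gamma> * d) ^ n) * k w \<le> k w * c1 * \<bar>f z\<bar>"
          proof -
            have "H / (V * (\<gamma> * d) ^ n) * (k w * \<bar>f z\<bar>) \<le> c1 * (k w * \<bar>f z\<bar>)"
              using \<open>H / (V * (\<gamma> * d) ^ n) \<le> c1\<close> knn[of w] by (intro mult_right_mono) auto
            then show ?thesis by (simp add: mult_ac)
          qed
          then show ?thesis using True zin c1 knn[of w] unfolding G_def d_def
            by (simp add: ennreal_mult'[symmetric] ennreal_leI)
        qed (auto simp: G_def)
      qed
      also have "\<dots> = ennreal (k w * c1) * (\<integral>\<^sup>+ z. ennreal \<bar>f z\<bar> * indicator (ball x R) z \<partial>lborel)"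
        using f by (intro nn_integral_cmult) (auto intro!: borel_measurable_times_ennreal borel_measurable_indicator)
      also have "\<dots> \<le> ennreal (k w * c1) * (Mx f x * ennreal (V * R ^ n))"
      proof (intro mult_left_mono)
        have pos: "0 < V * R ^ n" using V R0 by simp
        have "(\<integral>\<^sup>+ z. ennreal \<bar>f z\<bar> * indicator (ball x R) z \<partial>lborel)
            = (\<integral>\<^sup>+ z. ennreal \<bar>f z\<bar> * indicator (ball x R) z \<partial>lborel) * ennreal (1 / (V * R ^ n)) * ennreal (V * R ^ n)"
          using pos V R0 by (simp add: mult.assoc ennreal_mult'[symmetric])
        also have "\<dots> \<le> Mx f x * ennreal (V * R ^ n)"
          using Mx_ge[OF R(1) R0, of f x] unfolding V_def n_def by (intro mult_right_mono) auto
        finally show "(\<integral>\<^sup>+ z. ennreal \<bar>f z\<bar> * indicator (ball x R) z \<partial>lborel) \<le> Mx f x * ennreal (V * R ^ n)" .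
      qed simp
      also have "\<dots> = ennreal (k w) * (ennreal (c1 * (V * R ^ n)) * Mx f x)"
      proof -
        have e1: "ennreal (k w * c1) = ennreal (k w) * ennreal c1" using knn[of w] c1 by (rule ennreal_mult)
        have e2: "ennreal (c1 * (V * R ^ n)) = ennreal c1 * ennreal (V * R ^ n)" using c1 V R0 by (intro ennreal_mult) auto
        show ?thesis unfolding e1 e2 by (simp only: mult_ac)
      qed
      also have "\<dots> \<le> ennreal (k w) * (ennreal D * Mx f x)"
      proof (intro mult_left_mono mult_right_mono ennreal_leI)
        have "R ^ n \<le> (2 * s / (1 - \<gamma>)) ^ n" using R R0 by (intro power_mono) auto
        then have "c1 * (V * R ^ n) \<le> c1 * (V * (2 * s / (1 - \<gamma>)) ^ n)"
          using c1 V by (intro mult_left_mono) auto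
        also have "\<dots> = D"
        proof -
          have e1: "(2 * s / (1 - \<gamma>)) ^ n = 2 ^ n * s ^ n / (1 - \<gamma>) ^ n"
            by (simp only: power_divide power_mult_distrib)
          have e2: "(2 * (1 + \<gamma>) / ((1 - \<gamma>) * \<gamma>)) ^ n = 2 ^ n * (1 + \<gamma>) ^ n / ((1 - \<gamma>) ^ n * \<gamma> ^ n)"
            by (simp only: power_divide power_mult_distrib)
          have p1: "0 < s ^ n" "0 < \<gamma> ^ n" "0 < (1 - \<gamma>) ^ n" using s g0 g1 by auto
          show ?thesis unfolding c1_def D_def e1 e2 using V p1 s by (simp add: field_simps)
        qed
        finally show "c1 * (V * R ^ n) \<le> D" .
      qed auto
      finally show ?thesis .
    qed
  qed
  also have "\<dots> = (ennreal D * Mx f x) * (\<integral>\<^sup>+ w. ennreal (k w) \<partial>lborel)"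
    using km by (subst nn_integral_multc) (auto simp: mult_ac)
  also have "\<dots> = ennreal D * Mx f x" using k1 by simp
  finally show ?thesis unfolding D_def n_def .
qed



lemma powr_integral:
  fixes a c :: real
  assumes a: "a > -1" and c: "0 \<le> c"
  shows "(\<integral>\<^sup>+ t. ennreal (t powr a) * indicator {0<..<c} t \<partial>lborel) = ennreal (c powr (a + 1) / (a + 1))"
proof -
  have "((\<lambda>t. t powr a) has_integral (c powr (a + 1) / (a + 1))) {0..c}"
    by (rule has_integral_powr_from_0[OF a c])
  then have hi: "((\<lambda>t. if t \<in> {0..c} then t powr a else 0) has_integral (c powr (a + 1) / (a + 1))) UNIV"
    by (simp only: has_integral_restrict_UNIV)
  have "(\<integral>\<^sup>+ t. ennreal (if t \<in> {0..c} then t powr a else 0) \<partial>lborel) = ennreal (c powr (a + 1) / (a + 1))"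
    by (rule nn_integral_has_integral_lborel[OF _ _ hi]) auto
  moreover have "(\<integral>\<^sup>+ t. ennreal (t powr a) * indicator {0<..<c} t \<partial>lborel)
      = (\<integral>\<^sup>+ t. ennreal (if t \<in> {0..c} then t powr a else 0) \<partial>lborel)"
  proof (rule nn_integral_cong_AE)
    have "AE t in lborel. t \<noteq> 0" "AE t in lborel. t \<noteq> c" by (rule AE_lborel_singleton)+
    then show "AE t in lborel. ennreal (t powr a) * indicator {0<..<c} t = ennreal (if t \<in> {0..c} then t powr a else 0)"
      by eventually_elim (auto simp: indicator_def)
  qed
  ultimately show ?thesis by simp
qed

definition pw :: "real \<Rightarrow> ennreal \<Rightarrow> ennreal" where
  "pw p y = (if y = \<infinity> then \<infinity> else ennreal (enn2real y powr p))"

definition LCk :: "real \<Rightarrow> ennreal \<Rightarrow> real \<Rightarrow> ennreal" where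
  "LCk p y t = (if 0 < t \<and> ennreal t < y then ennreal (p * t powr (p - 1)) else 0)"

lemma layer_cake_pt:
  assumes p: "0 < p"
  shows "pw p y = (\<integral>\<^sup>+ t. LCk p y t \<partial>lborel)"
proof (cases "y = \<infinity>")
  case False
  then obtain a where y: "y = ennreal a" "0 \<le> a" by (cases y) auto
  have "(\<integral>\<^sup>+ t. LCk p y t \<partial>lborel) = (\<integral>\<^sup>+ t. ennreal p * (ennreal (t powr (p - 1)) * indicator {0<..<a} t) \<partial>lborel)"
  proof (rule nn_integral_cong)
    fix t :: real
    show "LCk p y t = ennreal p * (ennreal (t powr (p - 1)) * indicator {0<..<a} t)"
      using p y by (cases "0 < t") (auto simp: LCk_def indicator_def ennreal_less_iff ennreal_mult')
  qed
  also have "\<dots> = ennreal p * ennreal (a powr (p - 1 + 1) / (p - 1 + 1))"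
    using p y by (subst nn_integral_cmult) (auto simp: powr_integral)
  also have "\<dots> = pw p y"
    using p y by (simp add: pw_def ennreal_mult'[symmetric])
  finally show ?thesis by simp
next
  case True
  have "(\<integral>\<^sup>+ t. LCk p y t \<partial>lborel) = \<infinity>"
  proof (rule ccontr)
    assume "(\<integral>\<^sup>+ t. LCk p y t \<partial>lborel) \<noteq> \<infinity>"
    then obtain M where M: "(\<integral>\<^sup>+ t. LCk p y t \<partial>lborel) = ennreal M" "0 \<le> M"
      by (cases "(\<integral>\<^sup>+ t. LCk p y t \<partial>lborel)") auto
    define a where "a = (M + 1) powr (1 / p)"
    have a: "0 \<le> a" unfolding a_def by simp
    have ap: "a powr p = M + 1" unfolding a_def using M p by (simp add: powr_powr)
    have "(\<integral>\<^sup>+ t. ennreal p * (ennreal (t powr (p - 1)) * indicator {0<..<a} t) \<partial>lborel) \<le> (\<integral>\<^sup>+ t. LCk p y t \<partial>lborel)"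
    proof (rule nn_integral_mono)
      fix t :: real
      show "ennreal p * (ennreal (t powr (p - 1)) * indicator {0<..<a} t) \<le> LCk p y t"
        using p True by (cases "0 < t") (auto simp: LCk_def indicator_def ennreal_mult')
    qed
    also have "(\<integral>\<^sup>+ t. ennreal p * (ennreal (t powr (p - 1)) * indicator {0<..<a} t) \<partial>lborel) = ennreal (M + 1)"
      using p a ap by (subst nn_integral_cmult) (auto simp: powr_integral ennreal_mult'[symmetric])
    finally show False using M by (simp add: ennreal_le_iff)
  qed
  then show ?thesis using True by (simp add: pw_def)
qed



lemma Mx_split:
  fixes f :: "'a::euclidean_space \<Rightarrow> real"
  assumes f: "f \<in> borel_measurable lborel" and t: "0 < t"
  shows "Mx f x \<le> Mx (\<lambda>z. if t / 2 < \<bar>f z\<bar> then f z else 0) x + ennreal (t / 2)"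
  unfolding Mx_def[of f]
proof (rule SUP_least)
  fix r :: real assume "r \<in> {r. r \<in> \<rat> \<and> 0 < r}"
  then have r: "r \<in> \<rat>" "0 < r" by auto
  define f1 where "f1 = (\<lambda>z. if t / 2 < \<bar>f z\<bar> then f z else 0)"
  define V where "V = unit_ball_vol (real DIM('a))"
  have V: "0 < V" unfolding V_def by simp
  have pos: "0 < V * r ^ DIM('a)" using V r by simp
  have f1m: "f1 \<in> borel_measurable lborel" unfolding f1_def using f by measurable
  have "(\<integral>\<^sup>+ z. ennreal \<bar>f z\<bar> * indicator (ball x r) z \<partial>lborel)
      \<le> (\<integral>\<^sup>+ z. ennreal \<bar>f1 z\<bar> * indicator (ball x r) z + ennreal (t / 2) * indicator (ball x r) z \<partial>lborel)"
  proof (rule nn_integral_mono)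
    fix z
    have "ennreal \<bar>f z\<bar> \<le> ennreal \<bar>f1 z\<bar> + ennreal (t / 2)"
      unfolding f1_def using t by (auto simp: ennreal_plus[symmetric] simp del: ennreal_plus intro!: ennreal_leI)
    then show "ennreal \<bar>f z\<bar> * indicator (ball x r) z \<le> ennreal \<bar>f1 z\<bar> * indicator (ball x r) z + ennreal (t / 2) * indicator (ball x r) z"
      by (auto simp: indicator_def)
  qed
  also have "\<dots> = (\<integral>\<^sup>+ z. ennreal \<bar>f1 z\<bar> * indicator (ball x r) z \<partial>lborel) + ennreal (t / 2) * ennreal (V * r ^ DIM('a))"
  proof -
    have ci: "(\<integral>\<^sup>+ z. ennreal (t / 2) * indicator (ball x r) z \<partial>lborel) = ennreal (t / 2) * ennreal (V * r ^ DIM('a))"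
      using r by (subst nn_integral_cmult_indicator) (auto simp: emeasure_ball V_def)
    show ?thesis
      using f1m r by (subst nn_integral_add) (auto intro!: borel_measurable_times_ennreal borel_measurable_indicator simp: ci)
  qed
  finally have le1: "(\<integral>\<^sup>+ z. ennreal \<bar>f z\<bar> * indicator (ball x r) z \<partial>lborel)
      \<le> (\<integral>\<^sup>+ z. ennreal \<bar>f1 z\<bar> * indicator (ball x r) z \<partial>lborel) + ennreal (t / 2) * ennreal (V * r ^ DIM('a))" .
  have "(\<integral>\<^sup>+ z. ennreal \<bar>f z\<bar> * indicator (ball x r) z \<partial>lborel) * ennreal (1 / (V * r ^ DIM('a)))
      \<le> ((\<integral>\<^sup>+ z. ennreal \<bar>f1 z\<bar> * indicator (ball x r) z \<partial>lborel) + ennreal (t / 2) * ennreal (V * r ^ DIM('a))) * ennreal (1 / (V * r ^ DIM('a)))"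
    by (intro mult_right_mono le1) auto
  also have "\<dots> = (\<integral>\<^sup>+ z. ennreal \<bar>f1 z\<bar> * indicator (ball x r) z \<partial>lborel) * ennreal (1 / (V * r ^ DIM('a))) + ennreal (t / 2)"
    using pos t V r by (simp add: distrib_right mult.assoc ennreal_mult'[symmetric])
  also have "\<dots> \<le> Mx f1 x + ennreal (t / 2)"
    using Mx_ge[OF r, of f1 x] unfolding V_def by (intro add_right_mono) auto
  finally show "(\<integral>\<^sup>+ z. ennreal \<bar>f z\<bar> * indicator (ball x r) z \<partial>lborel) *
        ennreal (1 / (unit_ball_vol (real DIM('a)) * r ^ DIM('a))) \<le> Mx (\<lambda>z. if t / 2 < \<bar>f z\<bar> then f z else 0) x + ennreal (t / 2)"
    unfolding f1_def V_def .
qed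



lemma to_lborel_pair:
  "h \<in> borel_measurable (borel \<Otimes>\<^sub>M borel) \<Longrightarrow> h \<in> borel_measurable (lborel \<Otimes>\<^sub>M lborel)"
  by (simp add: measurable_cong_sets[OF sets_pair_measure_cong[OF sets_lborel sets_lborel] refl])

lemma mult_powr_m1: "0 < (a::real) \<Longrightarrow> a * a powr (q - 1) = a powr q"
proof -
  assume a: "0 < a"
  have "a powr q = a powr (1 + (q - 1))" by simp
  also have "\<dots> = a powr 1 * a powr (q - 1)" by (rule powr_add)
  finally show ?thesis using a by simp
qed

lemma Mx_Lp:
  fixes f :: "'a::euclidean_space \<Rightarrow> real"
  assumes f: "f \<in> borel_measurable lborel" and p: "1 < p"
    and fin: "(\<integral>\<^sup>+ z. ennreal (\<bar>f z\<bar> powr p) \<partial>lborel) < \<infinity>"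
  shows "(\<integral>\<^sup>+ x. pw p (Mx f x) \<partial>lborel)
     \<le> ennreal (2 powr p * 5 ^ DIM('a) * p / (p - 1)) * (\<integral>\<^sup>+ z. ennreal (\<bar>f z\<bar> powr p) \<partial>lborel)"
proof -
  define n where "n = DIM('a)"
  define F where "F = Mx f"
  have Fm: "F \<in> borel_measurable borel" unfolding F_def using Mx_meas[OF f] by simp
  have f': "f \<in> borel_measurable borel" using f by simp
  have fpb: "(\<lambda>z. ennreal (\<bar>f z\<bar> powr p)) \<in> borel_measurable borel" using f' by measurable
  then have fp: "(\<lambda>z. ennreal (\<bar>f z\<bar> powr p)) \<in> borel_measurable lborel" by simp
  define c where "c = 2 * 5 ^ n * p"
  define A where "A = 2 powr p * 5 ^ n * p / (p - 1)"
  define G2 where "G2 = (\<lambda>x t. if 0 < t \<and> t < 2 * \<bar>f x\<bar> then ennreal (c * t powr (p - 2) * \<bar>f x\<bar>) else 0)"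
  have LCm: "(\<lambda>(x::'a, t::real). LCk p (F x) t) \<in> borel_measurable (lborel \<Otimes>\<^sub>M lborel)"
    by (rule to_lborel_pair) (unfold LCk_def, use Fm in measurable)
  have G2m: "(\<lambda>(x::'a, t::real). G2 x t) \<in> borel_measurable (lborel \<Otimes>\<^sub>M lborel)"
    by (rule to_lborel_pair) (unfold G2_def, use f' in measurable)
  have "(\<integral>\<^sup>+ x. pw p (F x) \<partial>lborel) = (\<integral>\<^sup>+ x. (\<integral>\<^sup>+ t. LCk p (F x) t \<partial>lborel) \<partial>lborel)"
    using p by (intro nn_integral_cong layer_cake_pt) auto
  also have "\<dots> = (\<integral>\<^sup>+ t. (\<integral>\<^sup>+ x. LCk p (F x) t \<partial>lborel) \<partial>lborel)"
    using lborel_pair.Fubini'[OF LCm] by simp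
  also have "\<dots> \<le> (\<integral>\<^sup>+ t. (\<integral>\<^sup>+ x. G2 x t \<partial>lborel) \<partial>lborel)"
  proof (rule nn_integral_mono)
    fix t :: real
    show "(\<integral>\<^sup>+ x. LCk p (F x) t \<partial>lborel) \<le> (\<integral>\<^sup>+ x. G2 x t \<partial>lborel)"
    proof (cases "0 < t")
      case False
      then have "\<And>x. LCk p (F x) t = 0" by (simp add: LCk_def)
      then show ?thesis by simp
    next
      case t: True
      define f1 where "f1 = (\<lambda>z. if t / 2 < \<bar>f z\<bar> then f z else 0)"
      have f1m: "f1 \<in> borel_measurable lborel" unfolding f1_def using f by measurable
      have F1m: "Mx f1 \<in> borel_measurable lborel" by (rule Mx_meas[OF f1m])
      have Sm: "{x. ennreal t < F x} \<in> sets lborel" using Fm by measurable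
      have S1m: "{x. ennreal (t / 2) < Mx f1 x} \<in> sets lborel" using F1m by measurable
      have "(\<integral>\<^sup>+ x. LCk p (F x) t \<partial>lborel) = (\<integral>\<^sup>+ x. ennreal (p * t powr (p - 1)) * indicator {x. ennreal t < F x} x \<partial>lborel)"
        using t by (intro nn_integral_cong) (simp add: LCk_def indicator_def)
      also have "\<dots> = ennreal (p * t powr (p - 1)) * emeasure lborel {x. ennreal t < F x}"
        using Sm by (rule nn_integral_cmult_indicator)
      also have "\<dots> \<le> ennreal (p * t powr (p - 1)) * emeasure lborel {x. ennreal (t / 2) < Mx f1 x}"
      proof (intro mult_left_mono emeasure_mono S1m)
        show "{x. ennreal t < F x} \<subseteq> {x. ennreal (t / 2) < Mx f1 x}"
        proof
          fix x assume "x \<in> {x. ennreal t < F x}"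
          then have "ennreal t < Mx f1 x + ennreal (t / 2)"
            using Mx_split[OF f t, of x] unfolding F_def f1_def by simp
          moreover have "ennreal (t / 2) + ennreal (t / 2) = ennreal t"
            using t by (simp add: ennreal_plus[symmetric] del: ennreal_plus)
          ultimately show "x \<in> {x. ennreal (t / 2) < Mx f1 x}"
            by (metis add_right_mono mem_Collect_eq not_le)
        qed
      qed auto
      also have "\<dots> = ennreal (p * t powr (p - 1) * (2 / t)) * (ennreal (t / 2) * emeasure lborel {x. ennreal (t / 2) < Mx f1 x})"
        using t p by (simp add: mult.assoc[symmetric] ennreal_mult'[symmetric])
      also have "\<dots> \<le> ennreal (p * t powr (p - 1) * (2 / t)) * (ennreal (5 ^ n) * (\<integral>\<^sup>+ z. ennreal \<bar>f1 z\<bar> \<partial>lborel))"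
      proof (intro mult_left_mono)
        have fin1: "(\<integral>\<^sup>+ z. ennreal \<bar>f1 z\<bar> \<partial>lborel) < \<infinity>"
        proof -
          have "(\<integral>\<^sup>+ z. ennreal \<bar>f1 z\<bar> \<partial>lborel) \<le> (\<integral>\<^sup>+ z. ennreal ((t / 2) powr (1 - p)) * ennreal (\<bar>f z\<bar> powr p) \<partial>lborel)"
          proof (rule nn_integral_mono)
            fix z
            show "ennreal \<bar>f1 z\<bar> \<le> ennreal ((t / 2) powr (1 - p)) * ennreal (\<bar>f z\<bar> powr p)"
            proof (cases "t / 2 < \<bar>f z\<bar>")
              case True
              have fz: "0 < \<bar>f z\<bar>" using True t by linarith
              have "\<bar>f z\<bar> = \<bar>f z\<bar> powr (1 - p) * \<bar>f z\<bar> powr p"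
                using fz by (simp add: powr_add[symmetric])
              also have "\<dots> \<le> (t / 2) powr (1 - p) * \<bar>f z\<bar> powr p"
                using True t p by (intro mult_right_mono powr_mono2') auto
              finally show ?thesis unfolding f1_def using True
                by (simp add: ennreal_mult'[symmetric] ennreal_leI)
            qed (simp add: f1_def)
          qed
          also have "\<dots> = ennreal ((t / 2) powr (1 - p)) * (\<integral>\<^sup>+ z. ennreal (\<bar>f z\<bar> powr p) \<partial>lborel)"
            using fp by (intro nn_integral_cmult) auto
          also have "\<dots> < \<infinity>" using fin by (simp add: ennreal_mult_less_top)
          finally show ?thesis .
        qed
        show "ennreal (t / 2) * emeasure lborel {x. ennreal (t / 2) < Mx f1 x} \<le> ennreal (5 ^ n) * (\<integral>\<^sup>+ z. ennreal \<bar>f1 z\<bar> \<partial>lborel)"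
          using Mx_weak[OF f1m fin1, of "t / 2"] t unfolding n_def by simp
      qed simp
      also have "\<dots> = (\<integral>\<^sup>+ x. ennreal (p * t powr (p - 1) * (2 / t) * 5 ^ n) * ennreal \<bar>f1 x\<bar> \<partial>lborel)"
      proof -
        have "ennreal (p * t powr (p - 1) * (2 / t) * 5 ^ n) = ennreal (p * t powr (p - 1) * (2 / t)) * ennreal (5 ^ n)"
          using t p by (intro ennreal_mult) auto
        then show ?thesis using f1m by (subst nn_integral_cmult) (auto simp: mult.assoc)
      qed
      also have "\<dots> = (\<integral>\<^sup>+ x. G2 x t \<partial>lborel)"
      proof (rule nn_integral_cong)
        fix x
        have tp: "t powr (p - 1) * (2 / t) = 2 * t powr (p - 2)"
        proof -
          have "t powr (p - 1) = t powr (1 + (p - 2))" by simp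
          also have "\<dots> = t powr 1 * t powr (p - 2)" by (rule powr_add)
          finally have "t powr (p - 1) = t powr 1 * t powr (p - 2)" .
          then show ?thesis using t by (simp add: field_simps)
        qed
        show "ennreal (p * t powr (p - 1) * (2 / t) * 5 ^ n) * ennreal \<bar>f1 x\<bar> = G2 x t"
          unfolding G2_def f1_def c_def using t p tp
          by (auto simp: ennreal_mult'[symmetric] mult_ac)
      qed
      finally show ?thesis .
    qed
  qed
  also have "\<dots> = (\<integral>\<^sup>+ x. (\<integral>\<^sup>+ t. G2 x t \<partial>lborel) \<partial>lborel)"
    using lborel_pair.Fubini'[OF G2m] by simp
  also have "\<dots> = (\<integral>\<^sup>+ x. ennreal A * ennreal (\<bar>f x\<bar> powr p) \<partial>lborel)"
  proof (rule nn_integral_cong)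
    fix x
    define a where "a = \<bar>f x\<bar>"
    have a: "0 \<le> a" unfolding a_def by simp
    have "(\<integral>\<^sup>+ t. G2 x t \<partial>lborel) = (\<integral>\<^sup>+ t. ennreal (c * a) * (ennreal (t powr (p - 2)) * indicator {0<..<2 * a} t) \<partial>lborel)"
    proof (rule nn_integral_cong)
      fix t :: real
      show "G2 x t = ennreal (c * a) * (ennreal (t powr (p - 2)) * indicator {0<..<2 * a} t)"
        unfolding G2_def a_def c_def using p
        by (auto simp: indicator_def ennreal_mult'[symmetric] mult_ac)
    qed
    also have "\<dots> = ennreal (c * a) * ennreal ((2 * a) powr (p - 2 + 1) / (p - 2 + 1))"
      using a p by (subst nn_integral_cmult) (auto simp: powr_integral)
    also have "\<dots> = ennreal A * ennreal (a powr p)"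
    proof -
      have e: "p - 2 + 1 = p - 1" by simp
      have "c * a * ((2 * a) powr (p - 1) / (p - 1)) = A * a powr p"
      proof (cases "a = 0")
        case True then show ?thesis using p by simp
      next
        case False
        then have a0: "0 < a" using a by simp
        have "a * (2 * a) powr (p - 1) = a * (2 powr (p - 1) * a powr (p - 1))"
          using a0 by (simp add: powr_mult)
        also have "\<dots> = 2 powr (p - 1) * (a * a powr (p - 1))" by (simp add: mult_ac)
        also have "\<dots> = 2 powr (p - 1) * a powr p" using mult_powr_m1[OF a0] by simp
        finally have "a * (2 * a) powr (p - 1) = 2 powr (p - 1) * a powr p" .
        moreover have "2 * 2 powr (p - 1) = 2 powr p"
          using mult_powr_m1[of 2 p] by simp
        ultimately have X: "a * (2 * a) powr (p - 1) * 2 = 2 powr p * a powr p"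
          by (metis mult.commute mult.left_commute)
        have "c * a * ((2 * a) powr (p - 1) / (p - 1)) = 5 ^ DIM('a) * p / (p - 1) * (a * (2 * a) powr (p - 1) * 2)"
          unfolding c_def n_def by (simp add: mult_ac)
        also have "\<dots> = A * a powr p" unfolding X A_def n_def by (simp add: mult_ac)
        finally show ?thesis .
      qed
      then show ?thesis unfolding e using a p c_def A_def
        by (simp add: ennreal_mult'[symmetric])
    qed
    finally show "(\<integral>\<^sup>+ t. G2 x t \<partial>lborel) = ennreal A * ennreal (\<bar>f x\<bar> powr p)" unfolding a_def .
  qed
  also have "\<dots> = ennreal A * (\<integral>\<^sup>+ z. ennreal (\<bar>f z\<bar> powr p) \<partial>lborel)"
    using fp by (intro nn_integral_cmult) auto
  finally show ?thesis unfolding A_def F_def n_def .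
qed



lemma pw_mono: "0 < p \<Longrightarrow> y1 \<le> y2 \<Longrightarrow> pw p y1 \<le> pw p y2"
  unfolding pw_def
  by (cases y1; cases y2) (auto intro!: ennreal_leI powr_mono2 simp: top_unique)

lemma pw_cmult:
  assumes "0 < D" "0 < p"
  shows "pw p (ennreal D * y) = ennreal (D powr p) * pw p y"
proof (cases y)
  case (real b)
  then show ?thesis using assms
    by (simp add: pw_def ennreal_mult'[symmetric] powr_mult ennreal_mult_eq_top_iff)
next
  case top
  then show ?thesis using assms by (simp add: pw_def ennreal_mult_eq_top_iff)
qed

lemma pw_meas:
  assumes g: "g \<in> borel_measurable M"
  shows "(\<lambda>x. pw p (g x)) \<in> borel_measurable M"
proof -
  have "(\<lambda>y::ennreal. ennreal (enn2real y powr p)) \<in> borel_measurable borel" by measurable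
  then have "(\<lambda>y::ennreal. if y = \<infinity> then \<infinity> else ennreal (enn2real y powr p)) \<in> borel_measurable borel"
    by (intro measurable_If) (auto intro: borel_closed)
  from measurable_compose[OF g this] show ?thesis unfolding pw_def .
qed

lemma kernel_meas:
  assumes "(\<lambda>(x, z). K x z) \<in> borel_measurable borel"
  shows "K x \<in> borel_measurable borel"
proof -
  have "(\<lambda>z. (\<lambda>(x, z). K x z) (x, z)) \<in> borel_measurable borel"
    by (rule measurable_compose[OF _ assms]) (intro borel_measurable_continuous_onI continuous_intros)
  then show ?thesis by simp
qed



theorem corollary3p4:
  fixes K :: "real \<Rightarrow> real \<Rightarrow> 'a::euclidean_space \<Rightarrow> 'a \<Rightarrow> real"
    and \<sigma>0 \<gamma> :: real
  assumes "0 < \<sigma>0" and "0 < \<gamma>" and "\<gamma> < 1"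
    and "\<And>\<sigma> \<alpha>. 0 < \<sigma> \<Longrightarrow> \<sigma> \<le> \<sigma>0 \<Longrightarrow> 0 < \<alpha> \<Longrightarrow> \<alpha> < 1 \<Longrightarrow>
           sym_markov_kernel (K \<sigma> \<alpha>) \<and> kernel_S \<sigma> \<alpha> (K \<sigma> \<alpha>) \<and>
           kernel_H \<gamma> (((1 + \<gamma>) / (1 - \<gamma>)) powr (real DIM('a) + \<sigma>)) (K \<sigma> \<alpha>)"
  shows "weak_type_11 (max_op \<sigma>0 K)
     \<and> (\<forall>p. 1 < p \<longrightarrow> bounded_Lp p (max_op \<sigma>0 K))
     \<and> bounded_Linf (max_op \<sigma>0 K)"
proof -
  note s0 = assms(1) and g0 = assms(2) and g1 = assms(3) and hyp = assms(4)
  define n where "n = DIM('a)"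
  define H0 where "H0 = ((1 + \<gamma>) / (1 - \<gamma>)) powr (real n + \<sigma>0)"
  define D where "D = H0 * (2 * (1 + \<gamma>) / ((1 - \<gamma>) * \<gamma>)) ^ n"
  have base: "1 \<le> (1 + \<gamma>) / (1 - \<gamma>)" using g0 g1 by (simp add: field_simps)
  have H0: "0 < H0" unfolding H0_def using base g0 g1 by simp
  have D: "0 < D" unfolding D_def using H0 g0 g1 by simp
  have kfacts: "K \<sigma> \<alpha> x \<in> borel_measurable borel \<and> (\<forall>z. 0 \<le> K \<sigma> \<alpha> x z) \<and>
      (\<integral>\<^sup>+ z. ennreal (K \<sigma> \<alpha> x z) \<partial>lborel) = 1"
    if "(\<alpha>, \<sigma>) \<in> {0<..<1} \<times> {0<..\<sigma>0}" for \<alpha> \<sigma> x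
  proof -
    have "sym_markov_kernel (K \<sigma> \<alpha>)" using hyp that by auto
    then show ?thesis unfolding sym_markov_kernel_def using kernel_meas[of "K \<sigma> \<alpha>" x] by auto
  qed
  have dom: "max_op \<sigma>0 K f x \<le> ennreal D * Mx f x" if f: "f \<in> borel_measurable lborel" for f x
    unfolding max_op_def
  proof (rule SUP_least)
    fix ps assume ps: "ps \<in> {0<..<1::real} \<times> {0<..\<sigma>0}"
    obtain \<alpha> \<sigma> where ps': "ps = (\<alpha>, \<sigma>)" by (cases ps)
    define H where "H = ((1 + \<gamma>) / (1 - \<gamma>)) powr (real DIM('a) + \<sigma>)"
    have kH: "kernel_H \<gamma> H (K \<sigma> \<alpha>)" unfolding H_def using hyp ps ps' by auto
    have kf: "K \<sigma> \<alpha> x \<in> borel_measurable borel" "\<And>z. 0 \<le> K \<sigma> \<alpha> x z"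
      "(\<integral>\<^sup>+ z. ennreal (K \<sigma> \<alpha> x z) \<partial>lborel) = 1"
      using kfacts[of \<alpha> \<sigma> x] ps ps' by auto
    have H: "0 < H" unfolding H_def using base g0 g1 by simp
    have HH0: "H \<le> H0" unfolding H_def H0_def n_def using ps ps' base
      by (intro powr_mono) auto
    have "ennreal \<bar>\<integral> z. K \<sigma> \<alpha> x z * f z \<partial>lborel\<bar>
        \<le> ennreal (H * (2 * (1 + \<gamma>) / ((1 - \<gamma>) * \<gamma>)) ^ DIM('a)) * Mx f x"
      by (rule pointwise_bound[OF kf(1) kf(2) kf(3) _ H g0 g1 f])
        (use kH in \<open>auto simp: kernel_H_def\<close>)
    also have "\<dots> \<le> ennreal D * Mx f x"
      unfolding D_def n_def using HH0 g0 g1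
      by (intro mult_right_mono ennreal_leI mult_right_mono) auto
    finally show "(case ps of (\<alpha>, \<sigma>) \<Rightarrow> ennreal \<bar>\<integral> z. K \<sigma> \<alpha> x z * f z \<partial>lborel\<bar>) \<le> ennreal D * Mx f x"
      using ps' by simp
  qed
  have W: "weak_type_11 (max_op \<sigma>0 K)"
    unfolding weak_type_11_def
  proof (intro exI[of _ "D * 5 ^ n"] conjI allI impI)
    show "0 \<le> D * 5 ^ n" using D by simp
    fix f :: "'a \<Rightarrow> real" and t :: real
    assume fi: "integrable lborel f" and t: "0 < t"
    have fm: "f \<in> borel_measurable lborel" using fi by auto
    have fin: "(\<integral>\<^sup>+ z. ennreal \<bar>f z\<bar> \<partial>lborel) < \<infinity>"
      using fi by (simp add: integrable_iff_bounded)
    define S where "S = {x. ennreal (t / D) < Mx f x}"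
    have Sm: "S \<in> sets lborel" unfolding S_def using Mx_meas[OF fm] by measurable
    have sub: "{x. ennreal t < max_op \<sigma>0 K f x} \<subseteq> S"
    proof
      fix x assume "x \<in> {x. ennreal t < max_op \<sigma>0 K f x}"
      then have lt: "ennreal t < ennreal D * Mx f x" using dom[OF fm, of x] by simp
      show "x \<in> S"
      proof (rule ccontr)
        assume "x \<notin> S"
        then have "Mx f x \<le> ennreal (t / D)" unfolding S_def by (simp add: not_less)
        then have "ennreal D * Mx f x \<le> ennreal D * ennreal (t / D)" by (rule mult_left_mono) simp
        also have "\<dots> = ennreal t" using D t by (simp add: ennreal_mult'[symmetric])
        finally show False using lt by simp
      qed
    qed
    have "outer_leb {x. ennreal t < max_op \<sigma>0 K f x} \<le> emeasure lborel S"
      unfolding outer_leb_def using Sm sub by (intro INF_lower) auto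
    then have "ennreal t * outer_leb {x. ennreal t < max_op \<sigma>0 K f x} \<le> ennreal t * emeasure lborel S"
      by (rule mult_left_mono) simp
    also have "\<dots> = ennreal D * (ennreal (t / D) * emeasure lborel S)"
      using D t by (simp add: mult.assoc[symmetric] ennreal_mult'[symmetric])
    also have "\<dots> \<le> ennreal D * (ennreal (5 ^ n) * (\<integral>\<^sup>+ z. ennreal \<bar>f z\<bar> \<partial>lborel))"
      using Mx_weak[OF fm fin, of "t / D"] D t unfolding S_def n_def
      by (intro mult_left_mono) auto
    also have "\<dots> = ennreal (D * 5 ^ n) * (\<integral>\<^sup>+ z. ennreal \<bar>f z\<bar> \<partial>lborel)"
      using D by (simp add: mult.assoc ennreal_mult')
    finally show "ennreal t * outer_leb {x. ennreal t < max_op \<sigma>0 K f x}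
        \<le> ennreal (D * 5 ^ n) * (\<integral>\<^sup>+ z. ennreal \<bar>f z\<bar> \<partial>lborel)" .
  qed
  have Lp: "bounded_Lp p (max_op \<sigma>0 K)" if p: "1 < p" for p
    unfolding bounded_Lp_def
  proof -
    define A where "A = 2 powr p * 5 ^ n * p / (p - 1)"
    have A: "0 < A" unfolding A_def using p by simp
    define C where "C = D * A powr (1 / p)"
    have CP: "C powr p = D powr p * A"
      unfolding C_def using D A p by (simp add: powr_mult powr_powr)
    show "\<exists>C\<ge>0. \<forall>f. f \<in> borel_measurable lborel \<longrightarrow>
          (\<integral>\<^sup>+ z. ennreal (\<bar>f z\<bar> powr p) \<partial>lborel) < \<infinity> \<longrightarrow>
          upper_nn_integral (\<lambda>x. if max_op \<sigma>0 K f x = \<infinity> then \<infinity> else ennreal (enn2real (max_op \<sigma>0 K f x) powr p))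
            \<le> ennreal (C powr p) * (\<integral>\<^sup>+ z. ennreal (\<bar>f z\<bar> powr p) \<partial>lborel)"
    proof (intro exI[of _ C] conjI allI impI)
      show "0 \<le> C" unfolding C_def using D by simp
      fix f :: "'a \<Rightarrow> real"
      assume fm: "f \<in> borel_measurable lborel" and fin: "(\<integral>\<^sup>+ z. ennreal (\<bar>f z\<bar> powr p) \<partial>lborel) < \<infinity>"
      define h where "h = (\<lambda>x. pw p (ennreal D * Mx f x))"
      have hm: "h \<in> borel_measurable lborel" unfolding h_def
        by (intro pw_meas) (use Mx_meas[OF fm] in measurable)
      have hge: "\<forall>x. (\<lambda>x. if max_op \<sigma>0 K f x = \<infinity> then \<infinity> else ennreal (enn2real (max_op \<sigma>0 K f x) powr p)) x \<le> h x"
      proof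
        fix x
        have "pw p (max_op \<sigma>0 K f x) \<le> h x" unfolding h_def using pw_mono[OF _ dom[OF fm, of x]] p by simp
        then show "(\<lambda>x. if max_op \<sigma>0 K f x = \<infinity> then \<infinity> else ennreal (enn2real (max_op \<sigma>0 K f x) powr p)) x \<le> h x"
          by (simp add: pw_def)
      qed
      have "upper_nn_integral (\<lambda>x. if max_op \<sigma>0 K f x = \<infinity> then \<infinity> else ennreal (enn2real (max_op \<sigma>0 K f x) powr p))
          \<le> (\<integral>\<^sup>+ x. h x \<partial>lborel)"
        unfolding upper_nn_integral_def using hm hge by (intro INF_lower) auto
      also have "\<dots> = (\<integral>\<^sup>+ x. ennreal (D powr p) * pw p (Mx f x) \<partial>lborel)"
        unfolding h_def using D p by (simp add: pw_cmult)
      also have "\<dots> = ennreal (D powr p) * (\<integral>\<^sup>+ x. pw p (Mx f x) \<partial>lborel)"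
        by (intro nn_integral_cmult pw_meas Mx_meas[OF fm])
      also have "\<dots> \<le> ennreal (D powr p) * (ennreal A * (\<integral>\<^sup>+ z. ennreal (\<bar>f z\<bar> powr p) \<partial>lborel))"
        using Mx_Lp[OF fm p fin] unfolding A_def n_def by (intro mult_left_mono) auto
      also have "\<dots> = ennreal (C powr p) * (\<integral>\<^sup>+ z. ennreal (\<bar>f z\<bar> powr p) \<partial>lborel)"
        unfolding CP using A by (simp add: mult.assoc ennreal_mult')
      finally show "upper_nn_integral (\<lambda>x. if max_op \<sigma>0 K f x = \<infinity> then \<infinity> else ennreal (enn2real (max_op \<sigma>0 K f x) powr p))
          \<le> ennreal (C powr p) * (\<integral>\<^sup>+ z. ennreal (\<bar>f z\<bar> powr p) \<partial>lborel)" .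
    qed
  qed
  have Li: "bounded_Linf (max_op \<sigma>0 K)"
    unfolding bounded_Linf_def
  proof (intro exI[of _ 1] conjI allI impI)
    fix f :: "'a \<Rightarrow> real" and M :: real
    assume fm: "f \<in> borel_measurable lborel" and ae: "AE z in lborel. \<bar>f z\<bar> \<le> M"
    have "max_op \<sigma>0 K f x \<le> ennreal (1 * M)" for x
      unfolding max_op_def
    proof (rule SUP_least)
      fix ps assume ps: "ps \<in> {0<..<1::real} \<times> {0<..\<sigma>0}"
      obtain \<alpha> \<sigma> where ps': "ps = (\<alpha>, \<sigma>)" by (cases ps)
      have kf: "K \<sigma> \<alpha> x \<in> borel_measurable borel" "\<And>z. 0 \<le> K \<sigma> \<alpha> x z"
        "(\<integral>\<^sup>+ z. ennreal (K \<sigma> \<alpha> x z) \<partial>lborel) = 1"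
        using kfacts[of \<alpha> \<sigma> x] ps ps' by auto
      have "ennreal \<bar>\<integral> z. K \<sigma> \<alpha> x z * f z \<partial>lborel\<bar> \<le> (\<integral>\<^sup>+ z. ennreal \<bar>K \<sigma> \<alpha> x z * f z\<bar> \<partial>lborel)"
        by (rule abs_integral_le_nn)
      also have "\<dots> \<le> (\<integral>\<^sup>+ z. ennreal (K \<sigma> \<alpha> x z) * ennreal M \<partial>lborel)"
      proof (rule nn_integral_mono_AE)
        show "AE z in lborel. ennreal \<bar>K \<sigma> \<alpha> x z * f z\<bar> \<le> ennreal (K \<sigma> \<alpha> x z) * ennreal M"
          using ae
        proof eventually_elim
          case (elim z)
          then have "\<bar>K \<sigma> \<alpha> x z * f z\<bar> \<le> K \<sigma> \<alpha> x z * M"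
            using kf(2)[of z] by (simp add: abs_mult mult_left_mono)
          then show ?case using kf(2)[of z] by (simp add: ennreal_mult'[symmetric] ennreal_leI)
        qed
      qed
      also have "\<dots> = (\<integral>\<^sup>+ z. ennreal (K \<sigma> \<alpha> x z) \<partial>lborel) * ennreal M"
        using kf(1) by (intro nn_integral_multc) simp
      also have "\<dots> = ennreal (1 * M)" using kf(3) by simp
      finally show "(case ps of (\<alpha>, \<sigma>) \<Rightarrow> ennreal \<bar>\<integral> z. K \<sigma> \<alpha> x z * f z \<partial>lborel\<bar>) \<le> ennreal (1 * M)"
        using ps' by simp
    qed
    then show "AE x in lborel. max_op \<sigma>0 K f x \<le> ennreal (1 * M)" by simp
  qed simp
  show ?thesis using W Lp Li by blast
qed

end
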